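(* Let $p$ and $q$ be prime numbers, let $u \geqslant 1$ and $n \geqslant q$ be integers, and let $$f(x) = a_{n}x^{n} + a_{n-1}x^{n-1} + \cdots + a_{q}x^{q} + p^{u} \in \mathbb{Z}[x]$$ with $a_n \neq 0$. Suppose that $p \nmid a_{q}$, that $q \nmid u$, and that $$p^{u} > |a_{n}| + |a_{n-1}| + \cdots + |a_{q}|.$$ Then $f(x)$ is irreducible over $\mathbb{Q}$. *)

theory Defs
  imports "HOL-Computational_Algebra.Computational_Algebra"
begin

end

theory Submission
  imports Defs "Berlekamp_Zassenhaus.Factor_Bound"
begin

hide_const (open) UnivPoly.coeff Module.smult

lemma prod_norm_gt1:
  fixes as :: "complex list"
  assumes "\<forall>a\<in>set as. cmod a > 1" "as \<noteq> []"
  shows "cmod (\<Prod>a\<leftarrow>as. - a) > 1"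
  using assms
proof (induction as)
  case Nil then show ?case by simp
next
  case (Cons x xs)
  show ?case
  proof (cases "xs = []")
    case True then show ?thesis using Cons by simp
  next
    case False
    then have "cmod (\<Prod>a\<leftarrow>xs. - a) > 1" using Cons by simp
    moreover have "cmod x > 1" using Cons by simp
    ultimately have "cmod x * cmod (\<Prod>a\<leftarrow>xs. - a) > 1 * 1"
      by (intro mult_strict_mono) auto
    then show ?thesis by (simp add: norm_mult)
  qed
qed

lemma coeff0_gt1:
  fixes g :: "int poly"
  assumes roots: "\<And>z. poly (map_poly of_int g) z = 0 \<Longrightarrow> cmod z > 1"
    and deg: "degree g \<ge> 1"
  shows "\<bar>coeff g 0\<bar> > 1"
proof -
  let ?gc = "map_poly (of_int :: int \<Rightarrow> complex) g"
  define rs where "rs = complex_roots_int g"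
  have fac: "smult (of_int (lead_coeff g)) (\<Prod>a\<leftarrow>rs. [:- a, 1:]) = ?gc"
    using complex_roots_int(1)[of g] unfolding rs_def by simp
  have len: "length rs = degree g" using complex_roots_int(2)[of g] unfolding rs_def by simp
  have g0: "g \<noteq> 0" using deg by auto
  have "\<forall>a\<in>set rs. cmod a > 1"
  proof
    fix a assume "a \<in> set rs"
    then have "poly (\<Prod>a\<leftarrow>rs. [:- a, 1:]) a = 0" by (rule linear_poly_root)
    then have "poly ?gc a = 0" by (subst fac[symmetric]) simp
    then show "cmod a > 1" by (rule roots)
  qed
  moreover have "rs \<noteq> []" using len deg by auto
  ultimately have P: "cmod (\<Prod>a\<leftarrow>rs. - a) > 1" by (rule prod_norm_gt1)
  have "poly ?gc 0 = of_int (lead_coeff g) * (\<Prod>a\<leftarrow>rs. - a)"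
    by (subst fac[symmetric]) (simp add: poly_prod_list o_def)
  moreover have "poly ?gc 0 = of_int (coeff g 0)" by (simp add: poly_0_coeff_0)
  ultimately have E: "of_int (coeff g 0) = (of_int (lead_coeff g) :: complex) * (\<Prod>a\<leftarrow>rs. - a)" by simp
  have L: "\<bar>lead_coeff g\<bar> \<ge> 1" using g0 by (simp add: int_one_le_iff_zero_less)
  have "cmod (of_int (coeff g 0)) = \<bar>real_of_int (lead_coeff g)\<bar> * cmod (\<Prod>a\<leftarrow>rs. - a)"
    unfolding E by (simp add: norm_mult)
  also have "\<dots> > 1"
  proof -
    have "\<bar>real_of_int (lead_coeff g)\<bar> \<ge> 1" using L by linarith
    then show ?thesis using P
      by (metis less_1_mult linorder_not_le mult.commute mult_cancel_right1 nless_le order_trans)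
  qed
  finally have "\<bar>real_of_int (coeff g 0)\<bar> > 1" by (metis norm_of_int)
  then show ?thesis by linarith
qed

lemma weight_min:
  fixes g :: "int poly" and W :: "nat \<Rightarrow> nat"
  assumes "g \<noteq> 0"
  shows "\<exists>k0 M. coeff g k0 \<noteq> 0 \<and> W k0 = M \<and> (\<forall>k. coeff g k \<noteq> 0 \<longrightarrow> M \<le> W k)
     \<and> (\<forall>k<k0. coeff g k \<noteq> 0 \<longrightarrow> M < W k)"
proof -
  define M where "M = (LEAST m. \<exists>k. coeff g k \<noteq> 0 \<and> W k = m)"
  have ex: "\<exists>m k. coeff g k \<noteq> 0 \<and> W k = m"
    using assms by (intro exI[of _ "W (degree g)"] exI[of _ "degree g"]) simp
  have "\<exists>k. coeff g k \<noteq> 0 \<and> W k = M"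
    unfolding M_def using ex by (rule LeastI_ex)
  define k0 where "k0 = (LEAST k. coeff g k \<noteq> 0 \<and> W k = M)"
  have k0: "coeff g k0 \<noteq> 0 \<and> W k0 = M"
    unfolding k0_def using \<open>\<exists>k. coeff g k \<noteq> 0 \<and> W k = M\<close> by (rule LeastI_ex)
  have le: "\<forall>k. coeff g k \<noteq> 0 \<longrightarrow> M \<le> W k"
    unfolding M_def by (auto intro: Least_le)
  have lt: "\<forall>k<k0. coeff g k \<noteq> 0 \<longrightarrow> M < W k"
  proof (intro allI impI)
    fix k assume "k < k0" "coeff g k \<noteq> 0"
    have "\<not> (coeff g k \<noteq> 0 \<and> W k = M)"
      using not_less_Least[OF \<open>k < k0\<close>[unfolded k0_def]] .
    with le \<open>coeff g k \<noteq> 0\<close> show "M < W k" by force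
  qed
  show ?thesis using k0 le lt by blast
qed


lemma prod_weight:
  fixes g h :: "int poly" and P :: int and Q U k1 k2 M1 M2 :: nat
  assumes P: "prime P" and Q: "Q > 0"
    and g1: "coeff g k1 \<noteq> 0" "Q * multiplicity P (coeff g k1) + U * k1 = M1"
    and g2: "\<And>k. coeff g k \<noteq> 0 \<Longrightarrow> M1 \<le> Q * multiplicity P (coeff g k) + U * k"
    and g3: "\<And>k. k < k1 \<Longrightarrow> coeff g k \<noteq> 0 \<Longrightarrow> M1 < Q * multiplicity P (coeff g k) + U * k"
    and h1: "coeff h k2 \<noteq> 0" "Q * multiplicity P (coeff h k2) + U * k2 = M2"
    and h2: "\<And>k. coeff h k \<noteq> 0 \<Longrightarrow> M2 \<le> Q * multiplicity P (coeff h k) + U * k"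
    and h3: "\<And>k. k < k2 \<Longrightarrow> coeff h k \<noteq> 0 \<Longrightarrow> M2 < Q * multiplicity P (coeff h k) + U * k"
  shows "coeff (g * h) (k1 + k2) \<noteq> 0 \<and>
    Q * multiplicity P (coeff (g * h) (k1 + k2)) + U * (k1 + k2) = M1 + M2"
proof -
  define K where "K = k1 + k2"
  define v where "v = (\<lambda>x::int. multiplicity P x)"
  define e where "e = v (coeff g k1) + v (coeff h k2)"
  have nu: "\<not> is_unit P" using P by (meson not_prime_unit)
  have mult: "\<And>x y. x \<noteq> 0 \<Longrightarrow> y \<noteq> 0 \<Longrightarrow> v (x * y) = v x + v y"
    unfolding v_def by (rule prime_elem_multiplicity_mult_distrib[OF prime_imp_prime_elem[OF P]])
  define main where "main = coeff g k1 * coeff h k2"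
  have main0: "main \<noteq> 0" using g1 h1 by (simp add: main_def)
  have vmain: "v main = e" unfolding main_def e_def using g1 h1 mult by simp
  have main_dvd: "P ^ e dvd main" using vmain multiplicity_dvd[of P main] by (simp add: v_def)
  have main_ndvd: "\<not> P ^ Suc e dvd main"
  proof
    assume "P ^ Suc e dvd main"
    then have "Suc e \<le> v main" unfolding v_def using main0 nu by (intro multiplicity_geI)
    then show False using vmain by simp
  qed
  have rest: "P ^ Suc e dvd coeff g x * coeff h (K - x)" if x: "x \<le> K" "x \<noteq> k1" for x
  proof (cases "coeff g x = 0 \<or> coeff h (K - x) = 0")
    case True then show ?thesis by auto
  next
    case False
    then have nz: "coeff g x \<noteq> 0" "coeff h (K - x) \<noteq> 0" by auto
    have UK: "U * x + U * (K - x) = U * k1 + U * k2"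
      using x(1) unfolding K_def by (metis add_mult_distrib2 le_add_diff_inverse)
    have "M1 + M2 < Q * v (coeff g x) + U * x + (Q * v (coeff h (K - x)) + U * (K - x))"
    proof (cases "x < k1")
      case True
      have "M1 < Q * v (coeff g x) + U * x" using g3[OF True nz(1)] by (simp add: v_def)
      moreover have "M2 \<le> Q * v (coeff h (K - x)) + U * (K - x)" using h2[OF nz(2)] by (simp add: v_def)
      ultimately show ?thesis by linarith
    next
      case False
      then have "K - x < k2" using x unfolding K_def by linarith
      then have "M2 < Q * v (coeff h (K - x)) + U * (K - x)" using h3 nz(2) by (simp add: v_def)
      moreover have "M1 \<le> Q * v (coeff g x) + U * x" using g2[OF nz(1)] by (simp add: v_def)
      ultimately show ?thesis by linarith
    qed
    then have "Q * e < Q * (v (coeff g x) + v (coeff h (K - x)))"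
      using g1(2) h1(2) UK unfolding e_def v_def by (simp add: add_mult_distrib2)
    then have "e < v (coeff g x * coeff h (K - x))"
      using mult nz by (simp add: mult_less_cancel1)
    then have "Suc e \<le> v (coeff g x * coeff h (K - x))" by simp
    then show ?thesis unfolding v_def by (rule multiplicity_dvd')
  qed
  have split: "coeff (g * h) K = main + (\<Sum>x\<in>{..K} - {k1}. coeff g x * coeff h (K - x))"
    unfolding coeff_mult main_def
    by (subst sum.remove[of _ k1]) (auto simp: K_def)
  have rest_dvd: "P ^ Suc e dvd (\<Sum>x\<in>{..K} - {k1}. coeff g x * coeff h (K - x))"
    by (rule dvd_sum) (use rest in auto)
  have d1: "P ^ e dvd coeff (g * h) K"
    unfolding split using main_dvd dvd_trans[OF le_imp_power_dvd[of e "Suc e" P] rest_dvd]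
    by (intro dvd_add) auto
  have d2: "\<not> P ^ Suc e dvd coeff (g * h) K"
  proof
    assume "P ^ Suc e dvd coeff (g * h) K"
    then have "P ^ Suc e dvd coeff (g * h) K - (\<Sum>x\<in>{..K} - {k1}. coeff g x * coeff h (K - x))"
      using rest_dvd by (rule dvd_diff)
    then show False using main_ndvd unfolding split by simp
  qed
  have nz: "coeff (g * h) K \<noteq> 0" using d2 by auto
  have "v (coeff (g * h) K) = e" unfolding v_def using d1 d2 by (rule multiplicity_eqI)
  then show ?thesis using nz g1(2) h1(2) unfolding K_def e_def v_def
    by (simp add: add_mult_distrib2)
qed


lemma roots_big:
  fixes p q u n :: nat and f :: "int poly"
  assumes "prime q" and "n \<ge> q"
    and "degree f = n"
    and "coeff f 0 = int p ^ u"
    and "\<forall>i. 0 < i \<and> i < q \<longrightarrow> coeff f i = 0"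
    and "int p ^ u > (\<Sum>i=q..n. \<bar>coeff f i\<bar>)"
    and root: "poly (map_poly (of_int :: int \<Rightarrow> complex) f) z = 0"
  shows "cmod z > 1"
proof (rule ccontr)
  assume "\<not> cmod z > 1"
  then have z1: "cmod z \<le> 1" by simp
  have q1: "q \<ge> 1" using assms(1) prime_ge_1_nat by blast
  let ?t = "\<lambda>k. (of_int (coeff f k) :: complex) * z ^ k"
  have "poly (map_poly (of_int :: int \<Rightarrow> complex) f) z = (\<Sum>k\<le>n. ?t k)"
    by (simp add: poly_altdef assms(3))
  also have "{..n} = insert 0 {1..n}" by auto
  also have "(\<Sum>k\<in>insert 0 {1..n}. ?t k) = ?t 0 + (\<Sum>k\<in>{1..n}. ?t k)"
    by (subst sum.insert) auto
  also have "(\<Sum>k\<in>{1..n}. ?t k) = (\<Sum>k\<in>{q..n}. ?t k)"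
  proof (rule sum.mono_neutral_right)
    show "\<forall>i\<in>{1..n} - {q..n}. ?t i = 0" using assms(5) by auto
  qed (use q1 in auto)
  finally have eq: "0 = of_int (int p ^ u) + (\<Sum>k\<in>{q..n}. ?t k)"
    using root assms(4) by simp
  have "cmod (\<Sum>k\<in>{q..n}. ?t k) \<le> (\<Sum>k\<in>{q..n}. cmod (?t k))" by (rule norm_sum)
  also have "\<dots> \<le> (\<Sum>k\<in>{q..n}. real_of_int \<bar>coeff f k\<bar>)"
  proof (rule sum_mono)
    fix k assume "k \<in> {q..n}"
    have "cmod z ^ k \<le> 1" using z1 by (simp add: power_le_one)
    then have "\<bar>real_of_int (coeff f k)\<bar> * cmod z ^ k \<le> \<bar>real_of_int (coeff f k)\<bar> * 1"
      by (intro mult_left_mono) auto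
    then show "cmod (?t k) \<le> real_of_int \<bar>coeff f k\<bar>"
      by (simp add: norm_mult norm_power)
  qed
  also have "\<dots> < real_of_int (int p ^ u)"
    using assms(6) by (metis of_int_less_iff of_int_sum)
  finally have lt: "cmod (\<Sum>k\<in>{q..n}. ?t k) < real p ^ u" by simp
  have "(\<Sum>k\<in>{q..n}. ?t k) = - of_int (int p ^ u)" using eq by (simp add: eq_neg_iff_add_eq_0 add.commute)
  then have "cmod (\<Sum>k\<in>{q..n}. ?t k) = real p ^ u" by (simp add: norm_power)
  with lt show False by simp
qed


lemma no_factor:
  fixes p q u n :: nat and f g h :: "int poly"
  assumes "prime p" and "prime q"
    and "u \<ge> 1" and "n \<ge> q"
    and "degree f = n"
    and "coeff f n \<noteq> 0"
    and "coeff f 0 = int p ^ u"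
    and "\<forall>i. 0 < i \<and> i < q \<longrightarrow> coeff f i = 0"
    and "\<not> int p dvd coeff f q"
    and "\<not> q dvd u"
    and "int p ^ u > (\<Sum>i=q..n. \<bar>coeff f i\<bar>)"
    and fgh: "f = g * h" and dg: "degree g \<ge> 1" and dh: "degree h \<ge> 1"
  shows False
proof -
  define P where "P = int p"
  have P: "prime P" using assms(1) unfolding P_def by (simp add: prime_nat_int_transfer)
  have nu: "\<not> is_unit P" using P by (meson not_prime_unit)
  have P0: "P \<noteq> 0" using P by auto
  define v where "v = (\<lambda>x::int. multiplicity P x)"
  have q0: "q > 0" using assms(2) prime_gt_0_nat by blast
  have g0: "g \<noteq> 0" and h0: "h \<noteq> 0" using dg dh by auto
  have rootsf: "cmod z > 1" if "poly (map_poly (of_int :: int \<Rightarrow> complex) f) z = 0" for z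
    using roots_big[OF assms(2,4,5,7,8,11) that] .
  have hom: "map_poly (of_int :: int \<Rightarrow> complex) f = map_poly of_int g * map_poly of_int h"
    unfolding fgh by (simp add: of_int_poly_hom.hom_mult)
  have b0: "\<bar>coeff g 0\<bar> > 1"
    by (rule coeff0_gt1[OF _ dg]) (rule rootsf, simp add: hom)
  have c0: "\<bar>coeff h 0\<bar> > 1"
    by (rule coeff0_gt1[OF _ dh]) (rule rootsf, simp add: hom)
  have bc: "coeff g 0 * coeff h 0 = P ^ u"
    using assms(7) unfolding fgh P_def by (simp add: coeff_mult_0)
  define s where "s = v (coeff g 0)"
  define t where "t = v (coeff h 0)"
  have gz: "coeff g 0 \<noteq> 0" "coeff h 0 \<noteq> 0" using b0 c0 by auto
  have st: "s + t = u"
  proof -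
    have "v (P ^ u) = u" unfolding v_def using P0 nu by (simp add: multiplicity_same_power)
    moreover have "v (coeff g 0 * coeff h 0) = s + t" unfolding s_def t_def v_def
      by (rule prime_elem_multiplicity_mult_distrib[OF prime_imp_prime_elem[OF P] gz])
    ultimately show ?thesis using bc by simp
  qed
  have s1: "s \<ge> 1"
  proof (rule ccontr)
    assume "\<not> s \<ge> 1"
    then have "t = u" using st by simp
    then have "P ^ u dvd coeff h 0" using multiplicity_dvd[of P "coeff h 0"] unfolding t_def v_def by simp
    then have "\<bar>P ^ u\<bar> \<le> \<bar>coeff h 0\<bar>" using gz(2) by (rule dvd_imp_le_int[rotated])
    moreover have "\<bar>coeff g 0\<bar> * \<bar>coeff h 0\<bar> = \<bar>P ^ u\<bar>" using bc by (metis abs_mult)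
    moreover have "\<bar>coeff h 0\<bar> > 0" using gz by simp
    moreover have "\<bar>coeff g 0\<bar> * \<bar>coeff h 0\<bar> > 1 * \<bar>coeff h 0\<bar>"
      using b0 gz by (intro mult_strict_right_mono) auto
    ultimately show False by linarith
  qed
  have t1: "t \<ge> 1"
  proof (rule ccontr)
    assume "\<not> t \<ge> 1"
    then have "s = u" using st by simp
    then have "P ^ u dvd coeff g 0" using multiplicity_dvd[of P "coeff g 0"] unfolding s_def v_def by simp
    then have "\<bar>P ^ u\<bar> \<le> \<bar>coeff g 0\<bar>" using gz(1) by (rule dvd_imp_le_int[rotated])
    moreover have "\<bar>coeff g 0\<bar> * \<bar>coeff h 0\<bar> = \<bar>P ^ u\<bar>" using bc by (metis abs_mult)
    moreover have "\<bar>coeff g 0\<bar> > 0" using gz by simp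
    moreover have "\<bar>coeff g 0\<bar> * \<bar>coeff h 0\<bar> > \<bar>coeff g 0\<bar> * 1"
      using c0 gz by (intro mult_strict_left_mono) auto
    ultimately show False by linarith
  qed
  have pb0: "P dvd coeff g 0"
    using multiplicity_dvd'[of 1 P "coeff g 0"] s1 unfolding s_def v_def by simp
  have pc0: "P dvd coeff h 0"
    using multiplicity_dvd'[of 1 P "coeff h 0"] t1 unfolding t_def v_def by simp
  have aq: "\<not> P dvd coeff f q" using assms(9) unfolding P_def .
  have coef: "coeff f k = (\<Sum>x\<le>k. coeff g x * coeff h (k - x))" for k
    unfolding fgh coeff_mult ..
  have exi: "\<exists>k. \<not> P dvd coeff g k"
  proof (rule ccontr)
    assume "\<not> ?thesis"
    then have "P dvd coeff f q" unfolding coef by (auto intro!: dvd_sum)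
    with aq show False ..
  qed
  have exj: "\<exists>k. \<not> P dvd coeff h k"
  proof (rule ccontr)
    assume "\<not> ?thesis"
    then have "P dvd coeff f q" unfolding coef by (auto intro!: dvd_sum)
    with aq show False ..
  qed
  define i where "i = (LEAST k. \<not> P dvd coeff g k)"
  define j where "j = (LEAST k. \<not> P dvd coeff h k)"
  have i1: "\<not> P dvd coeff g i" unfolding i_def using exi by (rule LeastI_ex)
  have j1: "\<not> P dvd coeff h j" unfolding j_def using exj by (rule LeastI_ex)
  have i2: "P dvd coeff g k" if "k < i" for k
    using not_less_Least[OF that[unfolded i_def]] by simp
  have j2: "P dvd coeff h k" if "k < j" for k
    using not_less_Least[OF that[unfolded j_def]] by simp
  have ipos: "i \<ge> 1" using i1 pb0 by (cases i) auto
  have jpos: "j \<ge> 1" using j1 pc0 by (cases j) auto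
  have ijq: "i + j \<le> q"
  proof (rule ccontr)
    assume "\<not> i + j \<le> q"
    then have "P dvd coeff g x * coeff h (q - x)" if "x \<in> {..q}" for x
    proof (cases "x < i")
      case True then show ?thesis using i2 by simp
    next
      case False
      then have "q - x < j" using \<open>\<not> i + j \<le> q\<close> jpos by arith
      then show ?thesis using j2 by simp
    qed
    then have "P dvd coeff f q" unfolding coef by (intro dvd_sum) auto
    with aq show False ..
  qed
  define W1 where "W1 = (\<lambda>k. q * v (coeff g k) + u * k)"
  define W2 where "W2 = (\<lambda>k. q * v (coeff h k) + u * k)"
  obtain k1 M1 where K1: "coeff g k1 \<noteq> 0" "W1 k1 = M1" "\<forall>k. coeff g k \<noteq> 0 \<longrightarrow> M1 \<le> W1 k"
     "\<forall>k<k1. coeff g k \<noteq> 0 \<longrightarrow> M1 < W1 k"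
    using weight_min[OF g0, of W1] by blast
  obtain k2 M2 where K2: "coeff h k2 \<noteq> 0" "W2 k2 = M2" "\<forall>k. coeff h k \<noteq> 0 \<longrightarrow> M2 \<le> W2 k"
     "\<forall>k<k2. coeff h k \<noteq> 0 \<longrightarrow> M2 < W2 k"
    using weight_min[OF h0, of W2] by blast
  have PW: "coeff (g * h) (k1 + k2) \<noteq> 0 \<and>
    q * multiplicity P (coeff (g * h) (k1 + k2)) + u * (k1 + k2) = M1 + M2"
    by (rule prod_weight[OF P q0]) (use K1 K2 in \<open>auto simp: W1_def W2_def v_def\<close>)
  have fbound: "u * q \<le> q * v (coeff f K) + u * K" if "coeff f K \<noteq> 0" for K
  proof (cases "K = 0")
    case True
    have "v (coeff f 0) = u" unfolding v_def assms(7) using P0 nu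
      by (simp add: P_def[symmetric] multiplicity_same_power)
    then show ?thesis using True by simp
  next
    case False
    then have "K \<ge> q" using that assms(8) by (meson not_le neq0_conv)
    then show ?thesis by (simp add: trans_le_add2)
  qed
  have Mge: "u * q \<le> M1 + M2" using fbound[of "k1 + k2"] PW unfolding fgh v_def by simp
  have A: "M1 \<le> q * s" using K1(3) gz unfolding W1_def s_def by force
  have B: "M2 \<le> q * t" using K2(3) gz unfolding W2_def t_def by force
  have vi: "v (coeff g i) = 0" using i1 unfolding v_def by (simp add: not_dvd_imp_multiplicity_0)
  have vj: "v (coeff h j) = 0" using j1 unfolding v_def by (simp add: not_dvd_imp_multiplicity_0)
  have "coeff g i \<noteq> 0" using i1 by auto
  then have C: "M1 \<le> u * i" using K1(3) vi unfolding W1_def by force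
  have "coeff h j \<noteq> 0" using j1 by auto
  then have D: "M2 \<le> u * j" using K2(3) vj unfolding W2_def by force
  have E1: "q * s + q * t = u * q" using st by (metis add_mult_distrib2 mult.commute)
  have E2: "u * i + u * j \<le> u * q" using ijq by (metis add_mult_distrib2 mult_le_mono2)
  have "q * s = u * i" using A B C D E1 E2 Mge by linarith
  then have "q dvd u * i" by (metis dvd_triv_left)
  then have "q dvd u \<or> q dvd i" using assms(2) by (simp add: prime_dvd_mult_iff)
  then have "q dvd i" using assms(10) by simp
  moreover have "i < q" using ijq jpos by linarith
  ultimately show False using ipos by (simp add: nat_dvd_not_less)
qed

theorem corollary1:
  fixes p q u n :: nat and f :: "int poly"
  assumes "prime p" and "prime q"
    and "u \<ge> 1" and "n \<ge> q"
    and "degree f = n"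
    and "coeff f n \<noteq> 0"
    and "coeff f 0 = int p ^ u"
    and "\<forall>i. 0 < i \<and> i < q \<longrightarrow> coeff f i = 0"
    and "\<not> int p dvd coeff f q"
    and "\<not> q dvd u"
    and "int p ^ u > (\<Sum>i=q..n. \<bar>coeff f i\<bar>)"
  shows "irreducible (map_poly (of_int :: int \<Rightarrow> rat) f)"
proof -
  have q1: "q \<ge> 1" using assms(2) prime_ge_1_nat by blast
  have "irreducible\<^sub>d (map_poly (of_int :: int \<Rightarrow> rat) f)"
  proof (rule irreducible\<^sub>dI)
    show "degree (map_poly (of_int :: int \<Rightarrow> rat) f) > 0" using assms(4,5) q1 by simp
  next
    fix g h :: "rat poly"
    assume "degree g > 0" "degree g < degree (map_poly (of_int :: int \<Rightarrow> rat) f)"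
      "degree h > 0" "degree h < degree (map_poly (of_int :: int \<Rightarrow> rat) f)"
      "map_poly (of_int :: int \<Rightarrow> rat) f = g * h"
    then obtain g' h' where "f = g' * h'" "degree g' = degree g" "degree h' = degree h"
      using rat_to_int_factor by blast
    then show False using no_factor[OF assms, of g' h'] \<open>degree g > 0\<close> \<open>degree h > 0\<close> by simp
  qed
  then show ?thesis by simp
qed

end
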